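(* Let $\alpha>0$, $A\ge0$, $B>0$, $t>0$, and let $P_n(x,t)$ be the monic polynomials orthogonal on $[0,\infty)$ w.r.t. $w(x,t)=x^\alpha e^{-x}(A+B\theta(x-t))$, with norms $h_n(t)$. Let $R_n(t)=Bt^\alpha e^{-t}\{P_n(t,t)\}^2/h_n(t)$, $r_n(t)=Bt^\alpha e^{-t}P_n(t,t)P_{n-1}(t,t)/h_{n-1}(t)$, $D_n(t)=\prod_{j=0}^{n-1}h_j(t)$ ($D_0=1$) and $H_n(t)=t\frac{d}{dt}\ln D_n(t)$. Then for $n\ge1$ (whenever the denominators are nonzero) $$tR_n=H_n-H_{n+1},$$ $$t\,r_n=\frac{[H_n-n(n+\alpha)](t+H_{n+1}-H_{n-1})+t\,n(n+\alpha)}{t+H_{n+1}-H_{n-1}-2n-\alpha},$$ and $$(t\,r_n)^2=\left[n(n+\alpha)+t\,r_n-H_n\right]\left[(tR_n)^2+tR_n(H_{n+1}+H_{n-1}-2H_n)\right];$$ substituting the first two formulas into the third yields a second-order difference equation in $n$ for $H_n$.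
   Context: $\theta$ is the Heaviside function ($1$ for $x>0$, $0$ otherwise); $P_n(t,t)$ is $P_n(x,t)$ at $x=t$. *)

theory Defs
  imports "HOL-Analysis.Analysis" "HOL-Computational_Algebra.Polynomial"
begin

definition heaviside :: "real \<Rightarrow> real" where
  "heaviside x = (if x > 0 then 1 else 0)"

definition weight :: "real \<Rightarrow> real \<Rightarrow> real \<Rightarrow> real \<Rightarrow> real \<Rightarrow> real" where
  "weight \<alpha> A B t x = x powr \<alpha> * exp (- x) * (A + B * heaviside (x - t))"

definition wip :: "real \<Rightarrow> real \<Rightarrow> real \<Rightarrow> real \<Rightarrow> real poly \<Rightarrow> real poly \<Rightarrow> real" where
  "wip \<alpha> A B t p q = (LINT x:{0..}|lborel. poly p x * poly q x * weight \<alpha> A B t x)"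

definition is_monic_OP :: "real \<Rightarrow> real \<Rightarrow> real \<Rightarrow> real \<Rightarrow> nat \<Rightarrow> real poly \<Rightarrow> bool" where
  "is_monic_OP \<alpha> A B t n p \<longleftrightarrow> degree p = n \<and> lead_coeff p = 1 \<and>
     (\<forall>q. degree q < n \<longrightarrow> wip \<alpha> A B t p q = 0)"

definition OP :: "real \<Rightarrow> real \<Rightarrow> real \<Rightarrow> real \<Rightarrow> nat \<Rightarrow> real poly" where
  "OP \<alpha> A B t n = (THE p. is_monic_OP \<alpha> A B t n p)"

definition Pn :: "real \<Rightarrow> real \<Rightarrow> real \<Rightarrow> nat \<Rightarrow> real \<Rightarrow> real \<Rightarrow> real" where
  "Pn \<alpha> A B n x t = poly (OP \<alpha> A B t n) x"

definition hn :: "real \<Rightarrow> real \<Rightarrow> real \<Rightarrow> nat \<Rightarrow> real \<Rightarrow> real" where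
  "hn \<alpha> A B n t = wip \<alpha> A B t (OP \<alpha> A B t n) (OP \<alpha> A B t n)"

definition Rn :: "real \<Rightarrow> real \<Rightarrow> real \<Rightarrow> nat \<Rightarrow> real \<Rightarrow> real" where
  "Rn \<alpha> A B n t = B * t powr \<alpha> * exp (- t) * (Pn \<alpha> A B n t t)\<^sup>2 / hn \<alpha> A B n t"

definition rn :: "real \<Rightarrow> real \<Rightarrow> real \<Rightarrow> nat \<Rightarrow> real \<Rightarrow> real" where
  "rn \<alpha> A B n t = B * t powr \<alpha> * exp (- t) * Pn \<alpha> A B n t t * Pn \<alpha> A B (n - 1) t t
      / hn \<alpha> A B (n - 1) t"

definition Dn :: "real \<Rightarrow> real \<Rightarrow> real \<Rightarrow> nat \<Rightarrow> real \<Rightarrow> real" where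
  "Dn \<alpha> A B n t = (\<Prod>j<n. hn \<alpha> A B j t)"

definition Hn :: "real \<Rightarrow> real \<Rightarrow> real \<Rightarrow> nat \<Rightarrow> real \<Rightarrow> real" where
  "Hn \<alpha> A B n t = t * deriv (\<lambda>s. ln (Dn \<alpha> A B n s)) t"

end

theory Submission imports Defs "HOL-Real_Asymp.Real_Asymp" begin

lemma gk_meas: "(\<lambda>x. indicator S x *\<^sub>R ((x::real)^k * x powr a * exp (-x))) \<in> borel_measurable lborel" if "S \<in> sets borel"
  using that by measurable

lemma gk_int:
  fixes a :: real assumes "a > -1"
  shows "set_integrable lborel {0..} (\<lambda>x::real. x^k * x powr a * exp (-x))"
proof -
  have "((\<lambda>t. t powr (real k + a + 1 - 1) / exp t) has_integral Gamma (real k + a + 1)) {0..}"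
    by (rule Gamma_integral_real) (use assms in auto)
  hence "((\<lambda>x::real. x^k * x powr a * exp (-x)) has_integral Gamma (real k + a + 1)) {0..}"
  proof (rule has_integral_eq[rotated])
    fix x :: real assume "x \<in> {0..}"
    show "x powr (real k + a + 1 - 1) / exp x = x^k * x powr a * exp (-x)"
    proof (cases "x = 0")
      case True then show ?thesis by simp
    next
      case False with \<open>x \<in> {0..}\<close> have "x > 0" by auto
      then show ?thesis by (simp add: powr_add powr_realpow exp_minus field_simps)
    qed
  qed
  hence "(\<lambda>x::real. x^k * x powr a * exp (-x)) absolutely_integrable_on {0..}"
    by (intro nonnegative_absolutely_integrable_1) (auto simp: integrable_on_def)
  thus ?thesis unfolding set_integrable_def
    by (subst (asm) integrable_completion) (auto intro: gk_meas)
qed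

definition Lf :: "(nat \<Rightarrow> real) \<Rightarrow> real poly \<Rightarrow> real" where
  "Lf \<mu> p = (\<Sum>i\<le>degree p. coeff p i * \<mu> i)"

fun gs :: "(nat \<Rightarrow> real) \<Rightarrow> nat \<Rightarrow> real poly" where
  "gs \<mu> 0 = 1"
| "gs \<mu> (Suc n) = monom 1 (Suc n) -
     (\<Sum>j\<le>n. smult (Lf \<mu> (monom 1 (Suc n) * gs \<mu> j) / Lf \<mu> (gs \<mu> j * gs \<mu> j)) (gs \<mu> j))"

lemma Lf_bound: "degree p \<le> N \<Longrightarrow> Lf \<mu> p = (\<Sum>i\<le>N. coeff p i * \<mu> i)"
  unfolding Lf_def
  by (rule sum.mono_neutral_left) (auto simp: coeff_eq_0)

lemma Lf_add: "Lf \<mu> (p + q) = Lf \<mu> p + Lf \<mu> q"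
proof -
  let ?N = "max (degree p) (degree q)"
  have "Lf \<mu> (p+q) = (\<Sum>i\<le>?N. coeff (p+q) i * \<mu> i)"
    by (rule Lf_bound) (simp add: degree_add_le)
  also have "\<dots> = (\<Sum>i\<le>?N. coeff p i * \<mu> i) + (\<Sum>i\<le>?N. coeff q i * \<mu> i)"
    by (simp add: distrib_right sum.distrib)
  also have "\<dots> = Lf \<mu> p + Lf \<mu> q" by (simp add: Lf_bound[of p "?N"] Lf_bound[of q "?N"])
  finally show ?thesis .
qed

lemma Lf_smult: "Lf \<mu> (smult c p) = c * Lf \<mu> p"
proof -
  have "Lf \<mu> (smult c p) = (\<Sum>i\<le>degree p. coeff (smult c p) i * \<mu> i)"
    by (rule Lf_bound) (simp add: degree_smult_le)
  thus ?thesis by (simp add: Lf_def sum_distrib_left mult.assoc)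
qed

lemma Lf_0[simp]: "Lf \<mu> 0 = 0" by (simp add: Lf_def)

lemma Lf_minus: "Lf \<mu> (- p) = - Lf \<mu> p"
  using Lf_smult[of \<mu> "-1" p] by simp

lemma Lf_diff: "Lf \<mu> (p - q) = Lf \<mu> p - Lf \<mu> q"
  using Lf_add[of \<mu> p "-q"] by (simp add: Lf_minus)

lemma Lf_sum: "Lf \<mu> (\<Sum>j\<in>S. f j) = (\<Sum>j\<in>S. Lf \<mu> (f j))"
  by (induction S rule: infinite_finite_induct) (auto simp: Lf_add)

lemma gs_deg_coeff: "degree (gs \<mu> n) \<le> n \<and> coeff (gs \<mu> n) n = 1"
proof (induction n rule: less_induct)
  case (less n)
  show ?case
  proof (cases n)
    case 0 thus ?thesis by simp
  next
    case (Suc m)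
    let ?S = "(\<Sum>j\<le>m. smult (Lf \<mu> (monom 1 (Suc m) * gs \<mu> j) / Lf \<mu> (gs \<mu> j * gs \<mu> j)) (gs \<mu> j))"
    have dS: "degree ?S \<le> m"
    proof (rule degree_sum_le)
      fix j assume "j \<in> {..m}"
      hence "degree (gs \<mu> j) \<le> m" using less[of j] Suc by auto
      thus "degree (smult (Lf \<mu> (monom 1 (Suc m) * gs \<mu> j) / Lf \<mu> (gs \<mu> j * gs \<mu> j)) (gs \<mu> j)) \<le> m"
        using degree_smult_le order.trans by blast
    qed simp
    have "degree (gs \<mu> n) \<le> Suc m" unfolding Suc gs.simps
      using dS by (intro degree_diff_le) (auto simp: degree_monom_le)
    moreover have "coeff ?S (Suc m) = 0" using dS by (simp add: coeff_eq_0)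
    ultimately show ?thesis using Suc by (simp add: coeff_diff)
  qed
qed

lemma gs_degree: "degree (gs \<mu> n) = n"
  using gs_deg_coeff[of \<mu> n] by (metis le_antisym le_degree zero_neq_one)

lemma gs_monic: "coeff (gs \<mu> n) n = 1" using gs_deg_coeff by blast

lemma gs_nz: "gs \<mu> n \<noteq> 0" using gs_monic[of \<mu> n] by auto

lemma deg_lt_or_0: "degree (p::real poly) \<le> m \<Longrightarrow> coeff p m = 0 \<Longrightarrow> p = 0 \<or> degree p < m"
  by (metis leading_coeff_0_iff le_neq_implies_less)

declare gs.simps(2)[simp del]

locale mom =
  fixes \<mu> :: "nat \<Rightarrow> real"
  assumes pos: "\<And>q. q \<noteq> 0 \<Longrightarrow> (\<forall>x\<ge>0. poly q x \<ge> 0) \<Longrightarrow> Lf \<mu> q > 0"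
begin

abbreviation P where "P n \<equiv> gs \<mu> n"
definition h where "h n = Lf \<mu> (P n * P n)"

lemma h_pos: "h n > 0"
  unfolding h_def by (rule pos) (auto simp: gs_nz)

lemma pairwise: "j < k \<Longrightarrow> Lf \<mu> (P k * P j) = 0"
proof (induction k arbitrary: j rule: less_induct)
  case (less k)
  then obtain m where k: "k = Suc m" by (cases k) auto
  have sym: "i \<le> m \<Longrightarrow> i \<noteq> j \<Longrightarrow> Lf \<mu> (P i * P j) = 0" for i
  proof -
    assume im: "i \<le> m" and ij: "i \<noteq> j"
    have jk: "j < k" by (rule less.prems)
    show ?thesis
    proof (cases "i < j")
      case True
      hence "Lf \<mu> (P j * P i) = 0" using less.IH[of j i] jk by blast
      thus ?thesis by (simp add: mult.commute)
    next
      case False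
      hence "j < i" using ij by simp
      thus ?thesis using less.IH[of i j] im k by simp
    qed
  qed
  let ?c = "\<lambda>i. Lf \<mu> (monom 1 (Suc m) * P i) / Lf \<mu> (P i * P i)"
  have jm: "j \<le> m" using less k by simp
  have "Lf \<mu> (P k * P j) = Lf \<mu> (monom 1 (Suc m) * P j) - (\<Sum>i\<le>m. ?c i * Lf \<mu> (P i * P j))"
    by (simp add: k gs.simps(2) left_diff_distrib Lf_diff sum_distrib_right Lf_sum Lf_smult)
  also have "(\<Sum>i\<le>m. ?c i * Lf \<mu> (P i * P j)) = ?c j * Lf \<mu> (P j * P j)"
    by (subst sum.remove[of _ j]) (use jm sym in auto)
  also have "\<dots> = Lf \<mu> (monom 1 (Suc m) * P j)"
    using h_pos[of j] by (simp add: h_def)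
  finally show ?case by simp
qed

lemma orth_aux: "degree q \<le> d \<Longrightarrow> d < k \<Longrightarrow> Lf \<mu> (P k * q) = 0"
proof (induction d arbitrary: q)
  case 0
  then have "q = smult (coeff q 0) (P 0)" by (auto elim!: degree_eq_zeroE)
  then show ?case using pairwise[of 0 k] 0 by (metis Lf_smult mult.commute mult_smult_left mult_zero_right)
next
  case (Suc d)
  let ?r = "q - smult (coeff q (Suc d)) (P (Suc d))"
  have "degree ?r \<le> Suc d" using Suc.prems
    by (intro degree_diff_le) (auto intro: order.trans[OF degree_smult_le] simp: gs_degree)
  moreover have "coeff ?r (Suc d) = 0" by (simp add: gs_monic)
  ultimately have "?r = 0 \<or> degree ?r \<le> d" using deg_lt_or_0 by fastforce
  hence r0: "Lf \<mu> (P k * ?r) = 0" using Suc by auto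
  have "q = smult (coeff q (Suc d)) (P (Suc d)) + ?r" by simp
  hence "Lf \<mu> (P k * q) = coeff q (Suc d) * Lf \<mu> (P k * P (Suc d)) + Lf \<mu> (P k * ?r)"
    by (metis Lf_add Lf_smult distrib_left mult_smult_right)
  thus ?case using r0 pairwise[of "Suc d" k] Suc.prems by simp
qed

lemma orth: "degree q < k \<Longrightarrow> Lf \<mu> (P k * q) = 0"
  using orth_aux by blast

lemma orth0: "degree q < k \<or> q = 0 \<Longrightarrow> Lf \<mu> (P k * q) = 0"
  using orth by auto

lemma proj: "degree q \<le> m \<Longrightarrow> Lf \<mu> (P m * q) = coeff q m * h m"
proof -
  assume dq: "degree q \<le> m"
  let ?r = "q - smult (coeff q m) (P m)"
  have "degree ?r \<le> m" using dq
    by (intro degree_diff_le) (auto intro: order.trans[OF degree_smult_le] simp: gs_degree)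
  moreover have "coeff ?r m = 0" by (simp add: gs_monic)
  ultimately have "?r = 0 \<or> degree ?r < m" using deg_lt_or_0 by blast
  hence r0: "Lf \<mu> (P m * ?r) = 0" using orth0 by blast
  have "q = smult (coeff q m) (P m) + ?r" by simp
  hence "Lf \<mu> (P m * q) = coeff q m * Lf \<mu> (P m * P m) + Lf \<mu> (P m * ?r)"
    by (metis Lf_add Lf_smult distrib_left mult_smult_right)
  thus ?thesis using r0 by (simp add: h_def)
qed

definition ismop where
  "ismop n p \<longleftrightarrow> degree p = n \<and> lead_coeff p = 1 \<and> (\<forall>q. degree q < n \<longrightarrow> Lf \<mu> (p * q) = 0)"

lemma ismop_P: "ismop n (P n)"
  unfolding ismop_def using gs_degree gs_monic orth by auto

lemma ismop_unique: "ismop n p \<Longrightarrow> p = P n"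
proof -
  assume a: "ismop n p"
  let ?d = "p - P n"
  have "degree ?d \<le> n" using a unfolding ismop_def by (intro degree_diff_le) (auto simp: gs_degree)
  moreover have "coeff ?d n = 0" using a unfolding ismop_def by (auto simp: gs_monic)
  ultimately have d: "?d = 0 \<or> degree ?d < n" using deg_lt_or_0 by blast
  show ?thesis
  proof (rule ccontr)
    assume "p \<noteq> P n"
    hence nz: "?d \<noteq> 0" by simp
    with d have dl: "degree ?d < n" by blast
    have "Lf \<mu> (?d * ?d) = Lf \<mu> (p * ?d) - Lf \<mu> (P n * ?d)" by (simp only: left_diff_distrib Lf_diff)
    also have "\<dots> = 0" using a dl orth unfolding ismop_def by simp
    finally have "Lf \<mu> (?d * ?d) = 0" .
    moreover have "Lf \<mu> (?d * ?d) > 0" using nz by (intro pos) auto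
    ultimately show False by simp
  qed
qed

lemma min_prop: "degree p = n \<Longrightarrow> coeff p n = 1 \<Longrightarrow> h n \<le> Lf \<mu> (p * p)"
proof -
  assume d: "degree p = n" and c: "coeff p n = 1"
  let ?d = "p - P n"
  have "degree ?d \<le> n" using d by (intro degree_diff_le) (auto simp: gs_degree)
  moreover have "coeff ?d n = 0" using c by (simp add: gs_monic)
  ultimately have dl: "?d = 0 \<or> degree ?d < n" using deg_lt_or_0 by blast
  have "p * p = P n * P n + (P n * ?d + P n * ?d) + ?d * ?d" by (simp add: algebra_simps)
  hence "Lf \<mu> (p*p) = h n + 2 * Lf \<mu> (P n * ?d) + Lf \<mu> (?d * ?d)"
    unfolding h_def by (simp only: Lf_add)
  moreover have "Lf \<mu> (P n * ?d) = 0" using orth0 dl by blast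
  moreover have "Lf \<mu> (?d * ?d) \<ge> 0" using pos[of "?d * ?d"] by (cases "?d = 0") auto
  ultimately show ?thesis by simp
qed

end

lemma coeff_xd: "coeff (pCons 0 (pderiv f)) i = real i * coeff f i"
  by (cases i) (auto simp: coeff_pderiv)

lemma deg_xd: "degree (pCons 0 (pderiv f)) \<le> degree (f::real poly)"
proof (cases "pderiv f = 0")
  case True thus ?thesis by simp
next
  case False
  hence "degree f > 0" using pderiv_eq_0_iff by force
  moreover have "degree (pCons 0 (pderiv f)) = Suc (degree (pderiv f))" using False by simp
  ultimately show ?thesis using degree_pderiv[of f] by linarith
qed

lemma deg_le_pred: "degree (p::real poly) \<le> Suc k \<Longrightarrow> coeff p (Suc k) = 0 \<Longrightarrow> degree p \<le> k"
  using deg_lt_or_0[of p "Suc k"] by auto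

lemma FI_general:
  assumes rec: "\<And>k. \<mu> (Suc k) = (real k + a + 1) * \<mu> k + c * t ^ Suc k"
  shows "Lf \<mu> (pCons 0 (pderiv f) + smult (a+1) f - pCons 0 f) = - t * c * poly f t"
proof -
  let ?D = "degree f"
  have d1: "degree (pCons 0 (pderiv f) + smult (a+1) f - pCons 0 f) \<le> Suc ?D"
  proof -
    have "degree (pCons 0 (pderiv f)) \<le> Suc ?D" using deg_xd[of f] by linarith
    moreover have "degree (smult (a+1) f) \<le> Suc ?D" using degree_smult_le[of "a+1" f] by linarith
    moreover have "degree (pCons 0 f) \<le> Suc ?D" by (rule degree_pCons_le)
    ultimately show ?thesis by (intro degree_diff_le degree_add_le)
  qed
  have "Lf \<mu> (pCons 0 (pderiv f) + smult (a+1) f - pCons 0 f)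
      = (\<Sum>i\<le>Suc ?D. (real i + a + 1) * coeff f i * \<mu> i) - (\<Sum>i\<le>Suc ?D. coeff (pCons 0 f) i * \<mu> i)"
    by (subst Lf_bound[OF d1]) (simp add: coeff_xd algebra_simps sum_subtractf)
  also have "(\<Sum>i\<le>Suc ?D. (real i + a + 1) * coeff f i * \<mu> i) = (\<Sum>i\<le>?D. (real i + a + 1) * coeff f i * \<mu> i)"
    by (simp add: coeff_eq_0)
  also have "(\<Sum>i\<le>Suc ?D. coeff (pCons 0 f) i * \<mu> i) = (\<Sum>i\<le>?D. coeff f i * \<mu> (Suc i))"
    by (subst sum.atMost_Suc_shift) simp
  also have "(\<Sum>i\<le>?D. (real i + a + 1) * coeff f i * \<mu> i) - (\<Sum>i\<le>?D. coeff f i * \<mu> (Suc i))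
      = (\<Sum>i\<le>?D. - t * c * (coeff f i * t ^ i))"
    by (subst sum_subtractf[symmetric]) (rule sum.cong, simp_all add: rec algebra_simps)
  also have "\<dots> = - t * c * poly f t"
    by (simp add: poly_altdef sum_distrib_left)
  finally show ?thesis .
qed

locale mom_ibp = mom +
  fixes a t c :: real
  assumes rec: "\<And>k. \<mu> (Suc k) = (real k + a + 1) * \<mu> k + c * t ^ Suc k"
  assumes tpos: "t > 0"
begin

lemma FI: "Lf \<mu> (pCons 0 (pderiv f) + smult (a+1) f - pCons 0 f) = - t * c * poly f t"
  by (rule FI_general[OF rec])

lemma IBP:
  assumes dg: "degree g \<le> m"
  shows "Lf \<mu> ((pCons 0 (pderiv (P m)) - pCons 0 (P m)) * g)
     = - t * c * poly (P m) t * poly g t - (real m + a + 1) * coeff g m * h m"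
proof -
  have e: "pCons 0 (pderiv (P m * g)) + smult (a+1) (P m * g) - pCons 0 (P m * g)
     = (pCons 0 (pderiv (P m)) - pCons 0 (P m)) * g + P m * pCons 0 (pderiv g) + smult (a+1) (P m * g)"
    by (simp add: pderiv_mult algebra_simps)
  have d2: "degree (pCons 0 (pderiv g)) \<le> m" using deg_xd[of g] dg by simp
  have "Lf \<mu> (P m * pCons 0 (pderiv g)) = real m * coeff g m * h m"
    using proj[OF d2] by (simp add: coeff_xd)
  moreover have "Lf \<mu> (P m * g) = coeff g m * h m" using proj[OF dg] .
  moreover have "Lf \<mu> (pCons 0 (pderiv (P m * g)) + smult (a+1) (P m * g) - pCons 0 (P m * g)) = - t * c * poly (P m * g) t"
    by (rule FI)
  ultimately show ?thesis unfolding e Lf_add Lf_smult by (simp add: algebra_simps)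
qed

end

lemma Lf_pc_diff[simp]: "Lf \<mu> (pCons 0 (p - q)) = Lf \<mu> (pCons 0 p) - Lf \<mu> (pCons 0 q)"
  using Lf_diff[of \<mu> "pCons 0 p" "pCons 0 q"] by simp
lemma Lf_pc_add[simp]: "Lf \<mu> (pCons 0 (p + q)) = Lf \<mu> (pCons 0 p) + Lf \<mu> (pCons 0 q)"
  using Lf_add[of \<mu> "pCons 0 p" "pCons 0 q"] by simp

context mom_ibp begin

lemma coeff_xd_P: "coeff (pCons 0 (pderiv (P k))) k = real k"
  by (simp add: coeff_xd gs_monic)

lemma deg_xdP: "degree (pCons 0 (pderiv (P k))) \<le> k"
  using deg_xd[of "P k"] by (simp add: gs_degree)

lemma deg_xP: "degree (pCons 0 (P k)) \<le> Suc k"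
  using degree_pCons_le[of 0 "P k"] by (simp add: gs_degree)

lemma alpha: "Lf \<mu> (pCons 0 (P k) * P k) = (2 * real k + a + 1) * h k + t * c * (poly (P k) t)^2"
proof -
  have "Lf \<mu> ((pCons 0 (pderiv (P k)) - pCons 0 (P k)) * P k)
     = - t * c * poly (P k) t * poly (P k) t - (real k + a + 1) * coeff (P k) k * h k"
    by (rule IBP) (simp add: gs_degree)
  moreover have "Lf \<mu> (pCons 0 (pderiv (P k)) * P k) = real k * h k"
    using proj[OF deg_xdP, of k] by (simp add: coeff_xd_P mult.commute)
  ultimately show ?thesis by (simp add: left_diff_distrib Lf_diff gs_monic power2_eq_square algebra_simps)
qed

definition pp where "pp k = (if k = 0 then 0 else coeff (P k) (k - 1))"

lemma prec: "pp (Suc k) = pp k - Lf \<mu> (pCons 0 (P k) * P k) / h k"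
proof -
  let ?Q = "pCons 0 (P k) - P (Suc k)"
  have "degree ?Q \<le> Suc k" using deg_xP[of k] by (intro degree_diff_le) (auto simp: gs_degree)
  moreover have "coeff ?Q (Suc k) = 0" by (simp add: gs_monic)
  ultimately have dQ: "degree ?Q \<le> k" by (rule deg_le_pred)
  have "Lf \<mu> (P k * ?Q) = Lf \<mu> (P k * pCons 0 (P k)) - Lf \<mu> (P k * P (Suc k))"
    by (simp only: right_diff_distrib Lf_diff)
  also have "Lf \<mu> (P k * P (Suc k)) = 0"
    using orth[of "P k" "Suc k"] by (simp add: gs_degree mult.commute)
  finally have c1: "Lf \<mu> (pCons 0 (P k) * P k) = coeff ?Q k * h k"
    using proj[OF dQ] by (simp add: mult.commute)
  have c2: "coeff ?Q k = pp k - pp (Suc k)"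
    unfolding pp_def by (cases k) auto
  have "Lf \<mu> (pCons 0 (P k) * P k) = (pp k - pp (Suc k)) * h k"
    using c1 unfolding c2 .
  thus ?thesis using h_pos[of k] by (simp add: field_simps)
qed

definition R where "R k = c * (poly (P k) t)^2 / h k"

lemma psum: "pp n = - (real n * (real n + a) + t * (\<Sum>k<n. R k))"
proof (induction n)
  case 0 thus ?case by (simp add: pp_def)
next
  case (Suc n)
  have "Lf \<mu> (pCons 0 (P n) * P n) / h n = 2 * real n + a + 1 + t * R n"
    using h_pos[of n] alpha[of n] by (simp add: R_def field_simps)
  thus ?case using Suc by (simp add: prec algebra_simps)
qed

lemma pbeta:
  assumes n: "n \<ge> 1"
  shows "pp n + h n / h (n-1) = t * c * poly (P n) t * poly (P (n-1)) t / h (n-1)"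
proof -
  obtain m where m: "n = Suc m" using n by (cases n) auto
  have "Lf \<mu> ((pCons 0 (pderiv (P n)) - pCons 0 (P n)) * P m)
     = - t * c * poly (P n) t * poly (P m) t - (real n + a + 1) * coeff (P m) n * h n"
    by (rule IBP) (simp add: gs_degree m)
  hence i1: "Lf \<mu> (pCons 0 (pderiv (P n)) * P m) - Lf \<mu> (pCons 0 (P n) * P m)
     = - t * c * poly (P n) t * poly (P m) t"
    by (simp add: left_diff_distrib Lf_diff coeff_eq_0 gs_degree m)
  let ?q = "pCons 0 (pderiv (P n)) - smult (real n) (P n)"
  have "degree ?q \<le> Suc m" using deg_xdP[of n] m
    by (intro degree_diff_le) (auto intro: order.trans[OF degree_smult_le] simp: gs_degree)
  moreover have "coeff ?q (Suc m) = 0" using m by (simp add: coeff_pderiv gs_monic)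
  ultimately have dq: "degree ?q \<le> m" by (rule deg_le_pred)
  have "Lf \<mu> (P m * ?q) = coeff ?q m * h m" by (rule proj[OF dq])
  also have "coeff ?q m = - pp n"
    using m by (simp add: coeff_xd pp_def algebra_simps coeff_pderiv gs_monic)
  finally have e1: "Lf \<mu> (P m * ?q) = - pp n * h m" .
  have "Lf \<mu> (P m * P n) = 0" using orth[of "P m" n] m by (simp add: gs_degree mult.commute)
  hence e2: "Lf \<mu> (pCons 0 (pderiv (P n)) * P m) = - pp n * h m"
    using e1 by (simp add: right_diff_distrib Lf_diff Lf_smult mult.commute)
  have "Lf \<mu> (pCons 0 (P n) * P m) = Lf \<mu> (P n * pCons 0 (P m))" by (simp add: mult.commute)
  also have "\<dots> = coeff (pCons 0 (P m)) n * h n" by (rule proj) (use deg_xP[of m] m in simp)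
  also have "\<dots> = h n" using m by (simp add: gs_monic)
  finally have e3: "Lf \<mu> (pCons 0 (P n) * P m) = h n" .
  from i1 e2 e3 have "- pp n * h m - h n = - t * c * poly (P n) t * poly (P m) t" by simp
  thus ?thesis using h_pos[of m] m by (simp add: field_simps)
qed

end

context mom_ibp begin

lemma riesz:
  assumes n: "n = Suc m" and dZ: "degree Z \<le> m"
    and LZ: "\<And>g. degree g \<le> m \<Longrightarrow> Lf \<mu> (Z * g) = \<gamma> * poly g t"
  shows "- t * poly Z 0 * h m = \<gamma> * (poly (P n) 0 * poly (P m) t - poly (P m) 0 * poly (P n) t)"
proof -
  define U where "U = [:-t,1:] * Z - smult (\<gamma> / h m) (smult (poly (P m) t) (P n) - smult (poly (P n) t) (P m))"
  have hm: "h m > 0" by (rule h_pos)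
  have cZ: "coeff Z m * h m = \<gamma> * poly (P m) t"
    using proj[OF dZ] LZ[of "P m"] by (simp add: gs_degree mult.commute)
  have dU1: "degree U \<le> Suc m"
  proof -
    have "degree ([:-t,1:] * Z) \<le> Suc m" using degree_mult_le[of "[:-t,1:]" Z] dZ by simp
    moreover have "degree (smult (\<gamma> / h m) (smult (poly (P m) t) (P n) - smult (poly (P n) t) (P m))) \<le> Suc m"
      by (rule order.trans[OF degree_smult_le], rule degree_diff_le)
         (auto intro: order.trans[OF degree_smult_le] simp: gs_degree n)
    ultimately show ?thesis unfolding U_def by (rule degree_diff_le)
  qed
  have "coeff U (Suc m) = coeff Z m - (\<gamma> / h m) * poly (P m) t"
    unfolding U_def using dZ by (simp add: coeff_eq_0 gs_monic n gs_degree)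
  also have "\<dots> = 0" using cZ hm by (simp add: field_simps)
  finally have dU: "degree U \<le> m" using dU1 deg_le_pred by blast
  have LU: "Lf \<mu> (U * g) = 0" if dg: "degree g \<le> m" for g
  proof -
    define k where "k = coeff g m"
    define G where "G = [:-t,1:] * g - smult k (P n)"
    have dG1: "degree G \<le> Suc m" unfolding G_def
      using degree_mult_le[of "[:-t,1:]" g] dg
      by (intro degree_diff_le) (auto intro: order.trans[OF degree_smult_le] simp: gs_degree n)
    have "coeff G (Suc m) = 0" unfolding G_def k_def using dg
      by (simp add: coeff_eq_0 gs_monic n)
    hence dG: "degree G \<le> m" using dG1 deg_le_pred by blast
    have pG: "poly G t = - k * poly (P n) t" unfolding G_def by simp
    have ZPn: "Lf \<mu> (Z * P n) = 0" using orth[of Z n] dZ n by (simp add: mult.commute)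
    have "U * g = Z * ([:-t,1:] * g) - smult (\<gamma> / h m) (smult (poly (P m) t) (P n * g) - smult (poly (P n) t) (P m * g))"
      unfolding U_def by (simp add: algebra_simps)
    also have "Z * ([:-t,1:] * g) = smult k (Z * P n) + Z * G" unfolding G_def by (simp add: algebra_simps)
    finally have "Lf \<mu> (U * g) = k * Lf \<mu> (Z * P n) + Lf \<mu> (Z * G)
       - (\<gamma> / h m) * (poly (P m) t * Lf \<mu> (P n * g) - poly (P n) t * Lf \<mu> (P m * g))"
      by (simp only: Lf_add Lf_diff Lf_smult)
    also have "Lf \<mu> (P n * g) = 0" using orth[of g n] dg n by simp
    also have "Lf \<mu> (P m * g) = k * h m" using proj[OF dg] k_def by simp
    also have "Lf \<mu> (Z * G) = \<gamma> * poly G t" by (rule LZ[OF dG])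
    finally show ?thesis using ZPn pG hm by (simp add: field_simps)
  qed
  have U0: "U = 0"
  proof (rule ccontr)
    assume "U \<noteq> 0"
    hence "Lf \<mu> (U * U) > 0" by (intro pos) auto
    thus False using LU[OF dU] by simp
  qed
  have "poly U 0 = 0" using U0 by simp
  hence "- t * poly Z 0 - (\<gamma> / h m) * (poly (P m) t * poly (P n) 0 - poly (P n) t * poly (P m) 0) = 0"
    unfolding U_def by simp
  thus ?thesis using hm by (simp add: field_simps)
qed

end

context mom_ibp begin

lemma E1:
  assumes n: "n = Suc m"
  shows "- t * (- real n * poly (P n) 0 - (h n / h m) * poly (P m) 0) * h m
     = (- t * c * poly (P n) t) * (poly (P n) 0 * poly (P m) t - poly (P m) 0 * poly (P n) t)"
proof -
  define Y where "Y = pCons 0 (pderiv (P n)) - smult (real n) (P n) - smult (h n / h m) (P m)"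
  have dY1: "degree Y \<le> Suc m" unfolding Y_def using deg_xdP[of n] n
    by (intro degree_diff_le) (auto intro: order.trans[OF degree_smult_le] simp: gs_degree)
  have "coeff Y (Suc m) = 0" unfolding Y_def using n by (simp add: coeff_pderiv gs_monic coeff_eq_0 gs_degree)
  hence dY: "degree Y \<le> m" using dY1 deg_le_pred by blast
  have LY: "Lf \<mu> (Y * g) = (- t * c * poly (P n) t) * poly g t" if dg: "degree g \<le> m" for g
  proof -
    have dgn: "degree g \<le> n" using dg n by simp
    have i: "Lf \<mu> ((pCons 0 (pderiv (P n)) - pCons 0 (P n)) * g)
       = - t * c * poly (P n) t * poly g t - (real n + a + 1) * coeff g n * h n"
      by (rule IBP[OF dgn])
    have cgn: "coeff g n = 0" using dg n by (simp add: coeff_eq_0)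
    have "Lf \<mu> (P n * pCons 0 g) = coeff (pCons 0 g) n * h n"
      by (rule proj) (use dg n degree_pCons_le[of 0 g] in simp)
    hence x: "Lf \<mu> (pCons 0 (P n) * g) = coeff g m * h n" using n by (simp add: mult.commute)
    have o: "Lf \<mu> (P n * g) = 0" using orth[of g n] dg n by simp
    have pm: "Lf \<mu> (P m * g) = coeff g m * h m" by (rule proj[OF dg])
    have "Y * g = (pCons 0 (pderiv (P n)) - pCons 0 (P n)) * g + pCons 0 (P n) * g
         - smult (real n) (P n * g) - smult (h n / h m) (P m * g)"
      unfolding Y_def by (simp add: algebra_simps)
    hence "Lf \<mu> (Y * g) = Lf \<mu> ((pCons 0 (pderiv (P n)) - pCons 0 (P n)) * g) + Lf \<mu> (pCons 0 (P n) * g)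
         - real n * Lf \<mu> (P n * g) - (h n / h m) * Lf \<mu> (P m * g)"
      by (simp only: Lf_add Lf_diff Lf_smult)
    thus ?thesis using i x o pm cgn h_pos[of m] by simp
  qed
  have "- t * poly Y 0 * h m = (- t * c * poly (P n) t) * (poly (P n) 0 * poly (P m) t - poly (P m) 0 * poly (P n) t)"
    by (rule riesz[OF n dY LY])
  moreover have "poly Y 0 = - real n * poly (P n) 0 - (h n / h m) * poly (P m) 0"
    unfolding Y_def by simp
  ultimately show ?thesis by simp
qed

lemma E2:
  assumes n: "n = Suc m"
  shows "- t * (poly (P n) 0 + (real n + a) * poly (P m) 0) * h m
     = (- t * c * poly (P m) t) * (poly (P n) 0 * poly (P m) t - poly (P m) 0 * poly (P n) t)"
proof -
  define Z where "Z = pCons 0 (pderiv (P m)) - pCons 0 (P m) + P n + smult (real n + a) (P m)"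
  have dZ1: "degree Z \<le> Suc m" unfolding Z_def using deg_xdP[of m] deg_xP[of m] n
    by (intro degree_add_le degree_diff_le) (auto intro: order.trans[OF degree_smult_le] simp: gs_degree)
  have "coeff Z (Suc m) = 0" unfolding Z_def using n
    by (simp add: coeff_pderiv gs_monic coeff_eq_0 gs_degree)
  hence dZ: "degree Z \<le> m" using dZ1 deg_le_pred by blast
  have LZ: "Lf \<mu> (Z * g) = (- t * c * poly (P m) t) * poly g t" if dg: "degree g \<le> m" for g
  proof -
    have i: "Lf \<mu> ((pCons 0 (pderiv (P m)) - pCons 0 (P m)) * g)
       = - t * c * poly (P m) t * poly g t - (real m + a + 1) * coeff g m * h m"
      by (rule IBP[OF dg])
    have o: "Lf \<mu> (P n * g) = 0" using orth[of g n] dg n by simp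
    have pm: "Lf \<mu> (P m * g) = coeff g m * h m" by (rule proj[OF dg])
    have "Z * g = (pCons 0 (pderiv (P m)) - pCons 0 (P m)) * g + P n * g + smult (real n + a) (P m * g)"
      unfolding Z_def by (simp add: algebra_simps)
    hence "Lf \<mu> (Z * g) = Lf \<mu> ((pCons 0 (pderiv (P m)) - pCons 0 (P m)) * g) + Lf \<mu> (P n * g)
         + (real n + a) * Lf \<mu> (P m * g)"
      by (simp only: Lf_add Lf_diff Lf_smult)
    thus ?thesis using i o pm n by (simp add: algebra_simps)
  qed
  have "- t * poly Z 0 * h m = (- t * c * poly (P m) t) * (poly (P n) 0 * poly (P m) t - poly (P m) 0 * poly (P n) t)"
    by (rule riesz[OF n dZ LZ])
  moreover have "poly Z 0 = poly (P n) 0 + (real n + a) * poly (P m) 0"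
    unfolding Z_def by simp
  ultimately show ?thesis by simp
qed

lemma P0: assumes n: "n = Suc m" shows "poly (P n) 0 \<noteq> 0"
proof
  assume z: "poly (P n) 0 = 0"
  obtain b S where bS: "P n = pCons b S" by (cases "P n") auto
  have b: "b = 0" using z bS by simp
  have Snz: "S \<noteq> 0" using bS b gs_nz[of \<mu> n] by auto
  have dS: "degree S < n" using bS Snz gs_degree[of \<mu> n] by simp
  have "Lf \<mu> (P n * S) = 0" by (rule orth[OF dS])
  moreover have "Lf \<mu> (P n * S) > 0"
  proof -
    have "P n * S = pCons 0 (S * S)" using bS b by simp
    moreover have "Lf \<mu> (pCons 0 (S * S)) > 0"
      by (rule pos) (use Snz in auto)
    ultimately show ?thesis by simp
  qed
  ultimately show False by simp
qed

end

lemma alg_det: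
  fixes t c hm H a0 b0 u w n a :: real
  assumes t: "t > 0" and hm: "hm > 0" and H: "H > 0" and a0: "a0 \<noteq> 0"
    and E1: "- t * (- n * a0 - (H / hm) * b0) * hm = (- t * c * u) * (a0 * w - b0 * u)"
    and E2: "- t * (a0 + (n + a) * b0) * hm = (- t * c * w) * (a0 * w - b0 * u)"
  shows "n * (n + a) + (c * u * w / hm) * (2 * n + a) = (H / hm) * (1 - c * u^2 / H - c * w^2 / hm)"
proof -
  define r where "r = c * u * w / hm"
  have e1: "(n + r) * a0 = (c * u^2 / hm - H / hm) * b0"
  proof -
    have "t * ((n * a0 + (H / hm) * b0) * hm) = t * (- (c * u) * (a0 * w - b0 * u))"
      using E1 hm by (simp add: algebra_simps)
    hence "(n * a0 + (H / hm) * b0) * hm = - (c * u) * (a0 * w - b0 * u)"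
      using t mult_cancel_left[of t] by (metis less_irrefl)
    hence F: "n * a0 * hm + H * b0 = c * u * u * b0 - c * u * w * a0" using hm by (simp add: algebra_simps)
    show ?thesis using hm unfolding r_def by (simp add: field_simps power2_eq_square) (use F in \<open>simp add: algebra_simps\<close>)
  qed
  have e2: "(n + a + r) * b0 = (c * w^2 / hm - 1) * a0"
  proof -
    have "t * ((a0 + (n + a) * b0) * hm) = t * ((c * w) * (a0 * w - b0 * u))"
      using E2 hm by (simp add: algebra_simps)
    hence "(a0 + (n + a) * b0) * hm = (c * w) * (a0 * w - b0 * u)"
      using t mult_cancel_left[of t] by (metis less_irrefl)
    hence F: "a0 * hm + (n + a) * b0 * hm = c * w * w * a0 - c * w * u * b0" using hm by (simp add: algebra_simps)
    show ?thesis using hm unfolding r_def by (simp add: field_simps power2_eq_square) (use F in \<open>simp add: algebra_simps\<close>)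
  qed
  have "(n + r) * (n + a + r) * a0 = (c * u^2 / hm - H / hm) * ((n + a + r) * b0)"
    using e1 by (metis mult.commute mult.left_commute)
  also have "\<dots> = (c * u^2 / hm - H / hm) * (c * w^2 / hm - 1) * a0" using e2 by simp
  finally have K: "(n + r) * (n + a + r) = (c * u^2 / hm - H / hm) * (c * w^2 / hm - 1)"
    using a0 by simp
  have r2: "r^2 = c^2 * u^2 * w^2 / hm^2"
    unfolding r_def using hm by (simp add: field_simps power2_eq_square)
  have "n * (n + a) + r * (2 * n + a) = (c * u^2 / hm - H / hm) * (c * w^2 / hm - 1) - r^2"
    using K by (simp add: algebra_simps power2_eq_square)
  also have "\<dots> = (H / hm) * (1 - c * u^2 / H - c * w^2 / hm)"
    unfolding r2 using hm H by (simp add: field_simps power2_eq_square)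
  finally show ?thesis unfolding r_def .
qed

context mom_ibp begin

definition Hs where "Hs k = - t * (\<Sum>j<k. R j)"

lemma final_alg:
  assumes n: "n \<ge> 1"
  defines "rr \<equiv> c * poly (P n) t * poly (P (n-1)) t / h (n-1)"
  shows "t * R n = Hs n - Hs (n + 1)
     \<and> (t + Hs (n + 1) - Hs (n - 1) - 2 * real n - a \<noteq> 0 \<longrightarrow>
         t * rr = ((Hs n - real n * (real n + a)) * (t + Hs (n + 1) - Hs (n - 1)) + t * real n * (real n + a))
           / (t + Hs (n + 1) - Hs (n - 1) - 2 * real n - a))
     \<and> (t * rr)\<^sup>2 = (real n * (real n + a) + t * rr - Hs n)
         * ((t * R n)\<^sup>2 + t * R n * (Hs (n + 1) + Hs (n - 1) - 2 * Hs n))"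
proof -
  obtain m where m: "n = Suc m" using n by (cases n) auto
  have hm: "h m > 0" and hn: "h n > 0" by (rule h_pos)+
  define \<beta> where "\<beta> = h n / h m"
  have f1: "t * R n = Hs n - Hs (n + 1)" by (simp add: Hs_def algebra_simps)
  have Hd: "Hs (n + 1) - Hs (n - 1) = - t * (R n + R m)" using m by (simp add: Hs_def algebra_simps)
  have Hd2: "Hs (n + 1) + Hs (n - 1) - 2 * Hs n = - t * R n + t * R m" using m by (simp add: Hs_def algebra_simps)
  have ppH: "pp n = Hs n - real n * (real n + a)" using psum[of n] by (simp add: Hs_def)
  have trr: "t * rr = pp n + \<beta>" using pbeta[OF n] m unfolding rr_def \<beta>_def by simp
  have det: "real n * (real n + a) + rr * (2 * real n + a) = \<beta> * (1 - R n - R m)"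
    using alg_det[OF tpos hm hn P0[OF m] E1[OF m] E2[OF m]] m
    unfolding rr_def \<beta>_def R_def by simp
  have rr2: "rr^2 = \<beta> * R n * R m"
    unfolding rr_def \<beta>_def R_def using m hm hn by (simp add: field_simps power2_eq_square)
  have f2: "t * rr = ((Hs n - real n * (real n + a)) * (t + Hs (n + 1) - Hs (n - 1)) + t * real n * (real n + a))
           / (t + Hs (n + 1) - Hs (n - 1) - 2 * real n - a)"
    if D: "t + Hs (n + 1) - Hs (n - 1) - 2 * real n - a \<noteq> 0"
  proof -
    have Hd': "Hs (n + 1) = Hs (n - 1) - t * (R n + R m)" using Hd by simp
    have "t * rr * (t + Hs (n + 1) - Hs (n - 1) - 2 * real n - a)
        = (t * rr) * (t - t * (R n + R m)) - t * rr * (2 * real n + a)"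
      unfolding Hd' by (simp add: algebra_simps)
    also have "(t * rr) * (t - t * (R n + R m)) = (pp n + \<beta>) * (t - t * (R n + R m))"
      by (simp only: trr)
    also have "t * rr * (2 * real n + a) = t * (\<beta> * (1 - R n - R m) - real n * (real n + a))"
    proof -
      have "t * (real n * (real n + a) + rr * (2 * real n + a)) = t * (\<beta> * (1 - R n - R m))"
        using det by simp
      thus ?thesis by (simp add: algebra_simps)
    qed
    finally have "t * rr * (t + Hs (n + 1) - Hs (n - 1) - 2 * real n - a)
        = pp n * (t + Hs (n + 1) - Hs (n - 1)) + t * real n * (real n + a)"
      unfolding Hd' by (simp add: algebra_simps)
    thus ?thesis using D ppH by (simp add: field_simps)
  qed
  have f3: "(t * rr)\<^sup>2 = (real n * (real n + a) + t * rr - Hs n)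
         * ((t * R n)\<^sup>2 + t * R n * (Hs (n + 1) + Hs (n - 1) - 2 * Hs n))"
  proof -
    have "real n * (real n + a) + t * rr - Hs n = \<beta>" using trr ppH by simp
    moreover have "(t * R n)\<^sup>2 + t * R n * (Hs (n + 1) + Hs (n - 1) - 2 * Hs n) = t^2 * R n * R m"
      unfolding Hd2 by (simp add: algebra_simps power2_eq_square)
    ultimately show ?thesis using rr2 by (simp add: power_mult_distrib algebra_simps)
  qed
  show ?thesis using f1 f2 f3 by blast
qed

end

locale wp =
  fixes al A B :: real
  assumes al: "al > 0" and Ann: "A \<ge> 0" and Bp: "B > 0"
begin

definition mu where "mu s k = (LINT x:{0..}|lborel. x^k * weight al A B s x)"

lemma meas_w: "(\<lambda>x. f x * weight al A B s x) \<in> borel_measurable lborel"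
  if "f \<in> borel_measurable lborel" for f
  using that unfolding weight_def heaviside_def by measurable

lemma w_nonneg: "x \<ge> 0 \<Longrightarrow> weight al A B s x \<ge> 0"
  using Ann Bp unfolding weight_def heaviside_def by auto

lemma w_le: "x \<ge> 0 \<Longrightarrow> weight al A B s x \<le> (A + B) * (x powr al * exp (-x))"
  using Ann Bp unfolding weight_def heaviside_def by (auto simp: algebra_simps)

lemma int_mon: "set_integrable lborel {0..} (\<lambda>x. x^k * weight al A B s x)"
proof (rule set_integrable_bound[where f = "\<lambda>x. (A + B) * (x^k * x powr al * exp (-x))"])
  show "set_integrable lborel {0..} (\<lambda>x. (A + B) * (x^k * x powr al * exp (-x)))"
    using gk_int[of al k] al by (intro set_integrable_mult_right) auto
  show "set_borel_measurable lborel {0..} (\<lambda>x. x^k * weight al A B s x)"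
    unfolding set_borel_measurable_def by (intro borel_measurable_scaleR meas_w) auto
  show "AE x in lborel. x \<in> {0..} \<longrightarrow> norm (x^k * weight al A B s x) \<le> norm ((A + B) * (x^k * x powr al * exp (-x)))"
  proof (rule AE_I2, rule impI)
    fix x :: real assume x: "x \<in> {0..}"
    hence "weight al A B s x \<le> (A + B) * (x powr al * exp (-x))" "weight al A B s x \<ge> 0"
      using w_le w_nonneg by auto
    moreover have "x^k \<ge> 0" using x by auto
    ultimately have "x^k * weight al A B s x \<le> x^k * ((A + B) * (x powr al * exp (-x)))"
      by (intro mult_left_mono) auto
    moreover have "x^k * weight al A B s x \<ge> 0" using \<open>x^k \<ge> 0\<close> \<open>weight al A B s x \<ge> 0\<close> by simp
    ultimately show "norm (x^k * weight al A B s x) \<le> norm ((A + B) * (x^k * x powr al * exp (-x)))"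
      by (simp add: algebra_simps)
  qed
qed

lemma int_poly: "set_integrable lborel {0..} (\<lambda>x. poly p x * weight al A B s x)"
proof -
  have e: "\<And>x. indicator {0..} x *\<^sub>R (\<Sum>i\<le>degree p. coeff p i * (x^i * weight al A B s x))
     = (\<Sum>i\<le>degree p. coeff p i * (indicator {0..} x *\<^sub>R (x^i * weight al A B s x)))"
    by (simp add: sum_distrib_left algebra_simps)
  have "set_integrable lborel {0..} (\<lambda>x. \<Sum>i\<le>degree p. coeff p i * (x^i * weight al A B s x))"
    unfolding set_integrable_def e
    by (intro Bochner_Integration.integrable_sum integrable_mult_right) (use int_mon[unfolded set_integrable_def] in auto)
  thus ?thesis by (simp add: poly_altdef sum_distrib_right mult.assoc)
qed

lemma int_poly_eq: "(LINT x:{0..}|lborel. poly p x * weight al A B s x) = Lf (mu s) p"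
proof -
  have "(LINT x:{0..}|lborel. poly p x * weight al A B s x)
      = (LINT x:{0..}|lborel. (\<Sum>i\<le>degree p. coeff p i * (x^i * weight al A B s x)))"
    by (simp add: poly_altdef sum_distrib_right mult.assoc)
  also have "\<dots> = (\<Sum>i\<le>degree p. coeff p i * mu s i)"
  proof -
    have e: "\<And>x. indicator {0..} x *\<^sub>R (\<Sum>i\<le>degree p. coeff p i * (x^i * weight al A B s x))
       = (\<Sum>i\<le>degree p. coeff p i * (indicator {0..} x *\<^sub>R (x^i * weight al A B s x)))"
      by (simp add: sum_distrib_left algebra_simps)
    show ?thesis
      unfolding set_lebesgue_integral_def mu_def e
      by (subst Bochner_Integration.integral_sum) (use int_mon[unfolded set_integrable_def] in auto)
  qed
  finally show ?thesis by (simp add: Lf_def)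
qed

lemma wip_eq: "wip al A B s p q = Lf (mu s) (p * q)"
  unfolding wip_def by (simp add: int_poly_eq[symmetric])

end

context wp begin

lemma ex_far: "(q::real poly) \<noteq> 0 \<Longrightarrow> \<exists>d. d > max s 0 \<and> (\<forall>x\<ge>d. poly q x \<noteq> 0)"
proof -
  assume q: "q \<noteq> 0"
  have fin: "finite {x. poly q x = 0}" using poly_roots_finite[OF q] .
  define d where "d = Max (insert (max s 0) {x. poly q x = 0}) + 1"
  have "max s 0 \<le> Max (insert (max s 0) {x. poly q x = 0})" by (rule Max_ge) (use fin in auto)
  moreover have "\<And>x. poly q x = 0 \<Longrightarrow> x \<le> Max (insert (max s 0) {x. poly q x = 0})" using fin by simp
  ultimately show ?thesis unfolding d_def by (intro exI[of _ "Max (insert (max s 0) {x. poly q x = 0}) + 1"]) force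
qed

lemma Lf_pos: assumes q: "q \<noteq> 0" and nn: "\<forall>x\<ge>0. poly q x \<ge> 0"
  shows "Lf (mu s) q > 0"
proof -
  obtain d where d: "d > max s 0" "\<And>x. x \<ge> d \<Longrightarrow> poly q x \<noteq> 0" using ex_far[OF q] by blast
  define g where "g x = poly q x * (x powr al * exp (-x) * (A + B))" for x
  have gc: "continuous_on {d..d+1} g" unfolding g_def using d
    by (intro continuous_intros) auto
  obtain x0 where x0: "x0 \<in> {d..d+1}" "\<And>y. y \<in> {d..d+1} \<Longrightarrow> g x0 \<le> g y"
    using continuous_attains_inf[OF compact_Icc _ gc] by auto
  have gpos: "g y > 0" if "y \<in> {d..d+1}" for y
  proof -
    have "poly q y > 0" using nn d that by (metis atLeastAtMost_iff less_eq_real_def max.strict_boundedE order.trans) 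
    moreover have "y > 0" using d that by auto
    ultimately show ?thesis unfolding g_def using Ann Bp by (intro mult_pos_pos) auto
  qed
  define m where "m = g x0"
  have m: "m > 0" unfolding m_def using gpos x0 by auto
  have fg: "poly q y * weight al A B s y = g y" if "y \<in> {d..d+1}" for y
    using that d unfolding g_def weight_def heaviside_def by auto
  have low: "m * indicator {d..d+1} y \<le> poly q y * weight al A B s y" if "y \<in> {0..}" for y
  proof (cases "y \<in> {d..d+1}")
    case True thus ?thesis using fg x0 m_def by simp
  next
    case False thus ?thesis using nn w_nonneg that by simp
  qed
  have ind: "indicator {0..} y *\<^sub>R (m * indicator {d..d+1} y) = m * indicator {d..d+1} y" for y :: real
    using d by (auto split: split_indicator)
  have int_ind: "set_integrable lborel {0..} (\<lambda>y. m * indicator {d..d+1} y)"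
    unfolding set_integrable_def ind by (intro integrable_mult_right integrable_real_indicator) auto
  have e1: "(LINT y:{0..}|lborel. m * indicator {d..d+1} y) = m"
    unfolding set_lebesgue_integral_def ind by simp
  have e2: "(LINT y:{0..}|lborel. m * indicator {d..d+1} y) \<le> (LINT y:{0..}|lborel. poly q y * weight al A B s y)"
    by (rule set_integral_mono[OF int_ind int_poly low])
  show ?thesis using e1 e2 m int_poly_eq[of q s] by linarith
qed

lemma mom_s: "mom (mu s)"
  by unfold_locales (rule Lf_pos, auto)

end

context wp begin

definition FF where "FF k x = x ^ Suc k * x powr al * exp (- x)"
definition ff where "ff k x = ((real k + 1 + al) * x ^ k - x ^ Suc k) * x powr al * exp (- x)"

lemma pow_aux: "real k * (x::real) ^ (k - Suc 0) * x = real k * x ^ k"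
  by (cases k) auto

lemma pow_aux2: "k \<noteq> 0 \<Longrightarrow> (x::real) * x ^ (k - Suc 0) = x ^ k"
  by (cases k) auto

lemma FF_deriv: "x > 0 \<Longrightarrow> (FF k has_real_derivative ff k x) (at x)"
proof -
  assume x: "x > 0"
  have "(FF k has_real_derivative
     (real (Suc k) * x ^ k * x powr al + x ^ Suc k * (al * x powr (al - 1))) * exp (-x) + x ^ Suc k * x powr al * (- exp (-x))) (at x)"
    unfolding FF_def using x apply (auto intro!: derivative_eq_intros simp: pow_aux algebra_simps)
    by (metis pow_aux2)
  moreover have "(real (Suc k) * x ^ k * x powr al + x ^ Suc k * (al * x powr (al - 1))) * exp (-x) + x ^ Suc k * x powr al * (- exp (-x))
       = ff k x"
  proof -
    have "x ^ Suc k * x powr (al - 1) = x ^ k * x powr al"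
      using x by (simp add: powr_diff field_simps)
    thus ?thesis unfolding ff_def by (simp add: algebra_simps)
  qed
  ultimately show ?thesis by simp
qed

lemma FF_cont: "continuous_on {0..} (FF k)"
  unfolding FF_def using al by (intro continuous_intros continuous_on_powr') auto

lemma ff_int: "set_integrable lborel {0..} (ff k)"
proof -
  have "set_integrable lborel {0..} (\<lambda>x. (real k + 1 + al) * (x ^ k * x powr al * exp (- x)) - x ^ Suc k * x powr al * exp (- x))"
    using gk_int[of al k] gk_int[of al "Suc k"] al by (intro set_integral_diff set_integrable_mult_right) auto
  thus ?thesis unfolding ff_def by (simp add: algebra_simps)
qed

lemma ftc_tail: assumes a: "a \<ge> 0"
  shows "(LINT x:{a<..}|lborel. ff k x) = - FF k a"
proof -
  have "(LBINT x=ereal a..\<infinity>. ff k x) = 0 - FF k a"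
  proof (rule interval_integral_FTC_integrable)
    show "ereal a < \<infinity>" by simp
    fix x assume "ereal a < ereal x" "ereal x < \<infinity>"
    hence x: "x > 0" using a by simp
    show "(FF k has_vector_derivative ff k x) (at x)"
      using FF_deriv[OF x] by (simp add: has_real_derivative_iff_has_vector_derivative)
    show "isCont (ff k) x" unfolding ff_def using x by (intro continuous_intros) auto
  next
    show "set_integrable lborel (einterval (ereal a) \<infinity>) (ff k)"
      using ff_int by (rule set_integrable_subset) (use a in auto)
    have "(FF k \<longlongrightarrow> FF k a) (at a within {0..})"
      using FF_cont a by (simp add: continuous_on_def)
    hence "(FF k \<longlongrightarrow> FF k a) (at_right a)"
      by (rule tendsto_within_subset) (use a in auto)
    thus "((FF k \<circ> real_of_ereal) \<longlongrightarrow> FF k a) (at_right (ereal a))"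
      by (simp add: ereal_tendsto_simps)
    have "(FF k \<longlongrightarrow> 0) at_top" unfolding FF_def by real_asymp
    thus "((FF k \<circ> real_of_ereal) \<longlongrightarrow> 0) (at_left \<infinity>)"
      by (simp add: ereal_tendsto_simps)
  qed
  thus ?thesis by (simp add: interval_lebesgue_integral_def)
qed

end

context wp begin

lemma heav_ind: "heaviside (x - t) = indicator {t<..} x"
  by (simp add: heaviside_def indicator_def)

lemma mu_rec: assumes t: "t > 0"
  shows "mu t (Suc k) = (real k + al + 1) * mu t k + (B * t powr al * exp (- t)) * t ^ Suc k"
proof -
  have pw: "(real k + 1 + al) * (x^k * weight al A B t x) - x^Suc k * weight al A B t x
        = A * ff k x + B * (ff k x * indicator {t<..} x)" for x
    unfolding weight_def ff_def heav_ind by (simp add: algebra_simps)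
  have i0: "set_integrable lborel {0..} (ff k)" by (rule ff_int)
  have itail: "set_integrable lborel {t<..} (ff k)"
    using ff_int by (rule set_integrable_subset) (use t in auto)
  have eqi: "indicator {0..} x *\<^sub>R (ff k x * indicator {t<..} x) = indicator {t<..} x *\<^sub>R ff k x" for x
    using t by (auto split: split_indicator)
  have i1: "set_integrable lborel {0..} (\<lambda>x. ff k x * indicator {t<..} x)"
    using itail unfolding set_integrable_def eqi .
  have l1: "(LINT x:{0..}|lborel. ff k x * indicator {t<..} x) = (LINT x:{t<..}|lborel. ff k x)"
    unfolding set_lebesgue_integral_def eqi ..
  have eq0: "indicator {0..} x *\<^sub>R ff k x = indicator {0<..} x *\<^sub>R ff k x" for x
    using al by (auto simp: ff_def split: split_indicator)
  have l0: "(LINT x:{0..}|lborel. ff k x) = (LINT x:{0<..}|lborel. ff k x)"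
    unfolding set_lebesgue_integral_def eq0 ..
  have "(real k + 1 + al) * mu t k - mu t (Suc k)
      = (LINT x:{0..}|lborel. (real k + 1 + al) * (x^k * weight al A B t x) - x^Suc k * weight al A B t x)"
    unfolding mu_def using int_mon[of k t] int_mon[of "Suc k" t] by (subst set_integral_diff) (auto simp del: power_Suc)
  also have "\<dots> = (LINT x:{0..}|lborel. A * ff k x + B * (ff k x * indicator {t<..} x))"
    unfolding pw ..
  also have "\<dots> = A * (LINT x:{0..}|lborel. ff k x) + B * (LINT x:{0..}|lborel. ff k x * indicator {t<..} x)"
    using i0 i1 by (subst set_integral_add) auto
  also have "\<dots> = A * 0 + B * (- FF k t)"
    unfolding l1 l0 using ftc_tail[of 0 k] ftc_tail[of t k] t by (simp add: FF_def)
  finally show ?thesis unfolding FF_def by (simp add: algebra_simps)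
qed

end

context wp begin

definition gg where "gg k x = x ^ k * x powr al * exp (- x)"

lemma mu_split: assumes s: "s \<ge> 0"
  shows "mu s k = A * (LINT x:{0..}|lborel. gg k x) + B * (LINT x:{s<..}|lborel. gg k x)"
proof -
  have ig: "set_integrable lborel {0..} (gg k)" unfolding gg_def using gk_int[of al k] al by simp
  have pw: "x^k * weight al A B s x = A * gg k x + B * (gg k x * indicator {s<..} x)" for x
    unfolding weight_def gg_def heav_ind by (simp add: algebra_simps)
  have itail: "set_integrable lborel {s<..} (gg k)"
    using ig by (rule set_integrable_subset) (use s in auto)
  have eqi: "indicator {0..} x *\<^sub>R (gg k x * indicator {s<..} x) = indicator {s<..} x *\<^sub>R gg k x" for x
    using s by (auto split: split_indicator)
  have i1: "set_integrable lborel {0..} (\<lambda>x. gg k x * indicator {s<..} x)"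
    using itail unfolding set_integrable_def eqi .
  have l1: "(LINT x:{0..}|lborel. gg k x * indicator {s<..} x) = (LINT x:{s<..}|lborel. gg k x)"
    unfolding set_lebesgue_integral_def eqi ..
  show ?thesis unfolding mu_def pw using ig i1 l1 by (subst set_integral_add) auto
qed

lemma mu_deriv: assumes t: "t > 0"
  shows "((\<lambda>s. mu s k) has_real_derivative (- (B * t powr al * exp (- t)) * t ^ k)) (at t)"
proof -
  define c where "c = t / 2"
  have c: "c > 0" "c < t" using t unfolding c_def by auto
  have ig: "set_integrable lborel {0..} (gg k)" unfolding gg_def using gk_int[of al k] al by simp
  define K where "K = A * (LINT x:{0..}|lborel. gg k x) + B * (LBINT x=ereal c..\<infinity>. gg k x)"
  have ev: "mu s k = K - B * (LBINT y=c..s. gg k y)" if s: "s \<ge> c" for s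
  proof -
    have "interval_lebesgue_integrable lborel (ereal c) \<infinity> (gg k)"
      unfolding interval_lebesgue_integrable_def using ig
      by (simp, rule set_integrable_subset) (use c in auto)
    hence "(LBINT x=ereal c..ereal s. gg k x) + (LBINT x=ereal s..\<infinity>. gg k x) = (LBINT x=ereal c..\<infinity>. gg k x)"
      using s by (intro interval_integral_sum) (simp add: min_def max_def)
    moreover have "(LBINT x=ereal s..\<infinity>. gg k x) = (LINT x:{s<..}|lborel. gg k x)"
      by (simp add: interval_integral_Ioi)
    ultimately have X: "(LINT x:{s<..}|lborel. gg k x) = (LBINT x=ereal c..\<infinity>. gg k x) - (LBINT x=ereal c..ereal s. gg k x)"
      by simp
    have s0: "s \<ge> 0" using s c by simp
    show ?thesis by (simp only: mu_split[OF s0] X K_def) (simp add: algebra_simps)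
  qed
  have cont: "continuous_on {c..2*t} (gg k)" unfolding gg_def using c by (intro continuous_intros) auto
  have "((\<lambda>u. LBINT y=c..u. gg k y) has_vector_derivative gg k t) (at t within {c..2*t})"
    by (rule interval_integral_FTC2[OF _ _ cont]) (use c t in auto)
  moreover have "at t within {c..2*t} = at t"
    by (rule at_within_interior) (use c t in \<open>auto simp: interior_atLeastAtMost_real\<close>)
  ultimately have d: "((\<lambda>u. LBINT y=c..u. gg k y) has_real_derivative gg k t) (at t)"
    by (simp add: has_real_derivative_iff_has_vector_derivative)
  have d2: "((\<lambda>u. K - B * (LBINT y=c..u. gg k y)) has_real_derivative (- (B * gg k t))) (at t)"
    using d by (auto intro!: derivative_eq_intros)
  have "eventually (\<lambda>s. mu s k = K - B * (LBINT y=c..s. gg k y)) (nhds t)"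
  proof -
    have "eventually (\<lambda>s. s \<in> {c<..}) (nhds t)" using c by (intro eventually_nhds_in_open) auto
    thus ?thesis by eventually_elim (use ev in auto)
  qed
  hence "((\<lambda>s. mu s k) has_real_derivative (- (B * gg k t))) (at t)"
    using d2 by (subst DERIV_cong_ev) auto
  thus ?thesis unfolding gg_def by (simp add: algebra_simps)
qed

end

definition sfam :: "(real \<Rightarrow> real poly) \<Rightarrow> real \<Rightarrow> bool" where
  "sfam F t \<longleftrightarrow> (\<exists>N. \<forall>s. degree (F s) \<le> N) \<and> (\<forall>i. (\<lambda>s. coeff (F s) i) differentiable (at t))"

lemma sfam_const: "sfam (\<lambda>s. p) t"
  unfolding sfam_def by auto

lemma sfam_add: "sfam F t \<Longrightarrow> sfam G t \<Longrightarrow> sfam (\<lambda>s. F s + G s) t"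
  unfolding sfam_def
proof (elim conjE exE, intro conjI allI exI)
  fix N M s assume "\<forall>s. degree (F s) \<le> N" "\<forall>s. degree (G s) \<le> M"
  thus "degree (F s + G s) \<le> max N M" by (meson degree_add_le le_max_iff_disj)
next
  fix i assume "\<forall>i. (\<lambda>s. coeff (F s) i) differentiable at t" "\<forall>i. (\<lambda>s. coeff (G s) i) differentiable at t"
  thus "(\<lambda>s. coeff (F s + G s) i) differentiable at t" by simp
qed

lemma sfam_smult: "f differentiable (at t) \<Longrightarrow> sfam F t \<Longrightarrow> sfam (\<lambda>s. smult (f s) (F s)) t"
  unfolding sfam_def
proof (elim conjE exE, intro conjI allI exI)
  fix N s assume "\<forall>s. degree (F s) \<le> N"
  thus "degree (smult (f s) (F s)) \<le> N" by (meson degree_smult_le order.trans)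
next
  fix i assume "f differentiable at t" "\<forall>i. (\<lambda>s. coeff (F s) i) differentiable at t"
  thus "(\<lambda>s. coeff (smult (f s) (F s)) i) differentiable at t" by simp
qed

lemma sfam_minus: "sfam F t \<Longrightarrow> sfam (\<lambda>s. - F s) t"
  using sfam_smult[of "\<lambda>s. -1" t F] by simp

lemma sfam_diff: "sfam F t \<Longrightarrow> sfam G t \<Longrightarrow> sfam (\<lambda>s. F s - G s) t"
  using sfam_add[of F t "\<lambda>s. - G s"] sfam_minus[of G t] by simp

lemma sfam_sum: "finite S \<Longrightarrow> (\<And>j. j \<in> S \<Longrightarrow> sfam (F j) t) \<Longrightarrow> sfam (\<lambda>s. \<Sum>j\<in>S. F j s) t"
proof (induction S rule: finite_induct)
  case empty thus ?case using sfam_const[of 0 t] by simp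
next
  case (insert x S)
  thus ?case using sfam_add[of "F x" t "\<lambda>s. \<Sum>j\<in>S. F j s"] by simp
qed

lemma sfam_mult: "sfam F t \<Longrightarrow> sfam G t \<Longrightarrow> sfam (\<lambda>s. F s * G s) t"
  unfolding sfam_def
proof (elim conjE exE, intro conjI allI exI)
  fix N M s assume "\<forall>s. degree (F s) \<le> N" "\<forall>s. degree (G s) \<le> M"
  thus "degree (F s * G s) \<le> N + M" by (meson add_mono degree_mult_le order.trans)
next
  fix i assume "\<forall>i. (\<lambda>s. coeff (F s) i) differentiable at t" "\<forall>i. (\<lambda>s. coeff (G s) i) differentiable at t"
  thus "(\<lambda>s. coeff (F s * G s) i) differentiable at t"
    unfolding coeff_mult by (intro differentiable_sum differentiable_mult) auto
qed

lemma Lf_diffble: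
  assumes M: "\<And>k. (\<lambda>s. M s k) differentiable (at t)" and F: "sfam F t"
  shows "(\<lambda>s. Lf (M s) (F s)) differentiable (at t)"
proof -
  obtain N where N: "\<And>s. degree (F s) \<le> N" using F unfolding sfam_def by blast
  have "(\<lambda>s. Lf (M s) (F s)) = (\<lambda>s. \<Sum>i\<le>N. coeff (F s) i * M s i)"
    using Lf_bound[OF N] by auto
  moreover have "(\<lambda>s. \<Sum>i\<le>N. coeff (F s) i * M s i) differentiable (at t)"
    using F M unfolding sfam_def by (intro differentiable_sum differentiable_mult) auto
  ultimately show ?thesis by simp
qed

lemma gs_sfam:
  assumes M: "\<And>k. (\<lambda>s. M s k) differentiable (at t)"
    and nz: "\<And>j. Lf (M t) (gs (M t) j * gs (M t) j) \<noteq> 0"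
  shows "sfam (\<lambda>s. gs (M s) n) t"
proof (induction n rule: less_induct)
  case (less n)
  show ?case
  proof (cases n)
    case 0 thus ?thesis using sfam_const[of 1 t] by simp
  next
    case (Suc m)
    have "sfam (\<lambda>s. monom 1 (Suc m) -
     (\<Sum>j\<le>m. smult (Lf (M s) (monom 1 (Suc m) * gs (M s) j) / Lf (M s) (gs (M s) j * gs (M s) j)) (gs (M s) j))) t"
    proof (intro sfam_diff sfam_const sfam_sum sfam_smult)
      fix j assume j: "j \<in> {..m}"
      hence IH: "sfam (\<lambda>s. gs (M s) j) t" using less Suc by auto
      show "sfam (\<lambda>s. gs (M s) j) t" by (rule IH)
      show "(\<lambda>s. Lf (M s) (monom 1 (Suc m) * gs (M s) j) / Lf (M s) (gs (M s) j * gs (M s) j)) differentiable at t"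
        using nz[of j] by (intro differentiable_divide Lf_diffble[OF M] sfam_mult IH sfam_const) auto
    qed simp
    thus ?thesis using Suc by (simp add: gs.simps(2))
  qed
qed

context wp begin

lemma ismop_iff: "is_monic_OP al A B s n p \<longleftrightarrow> mom.ismop (mu s) n p"
  unfolding is_monic_OP_def mom.ismop_def[OF mom_s] wip_eq ..

lemma OP_eq: "OP al A B s n = gs (mu s) n"
proof -
  interpret mom "mu s" by (rule mom_s)
  have "is_monic_OP al A B s n (gs (mu s) n)" using ismop_P ismop_iff by simp
  moreover have "\<And>p. is_monic_OP al A B s n p \<Longrightarrow> p = gs (mu s) n" using ismop_unique ismop_iff by simp
  ultimately show ?thesis unfolding OP_def by (rule the_equality)
qed

lemma hn_eq: "hn al A B n s = Lf (mu s) (gs (mu s) n * gs (mu s) n)"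
  unfolding hn_def OP_eq wip_eq ..

lemma hn_pos: "hn al A B n s > 0"
proof -
  interpret mom "mu s" by (rule mom_s)
  show ?thesis using h_pos[of n] unfolding hn_eq h_def .
qed

lemma mu_diffble: "t > 0 \<Longrightarrow> (\<lambda>s. mu s k) differentiable (at t)"
  using mu_deriv[of t k] real_differentiable_def by blast

lemma Lf_const_deriv: assumes t: "t > 0"
  shows "((\<lambda>s. Lf (mu s) q) has_real_derivative (- (B * t powr al * exp (- t)) * poly q t)) (at t)"
proof -
  have "((\<lambda>s. \<Sum>i\<le>degree q. coeff q i * mu s i) has_real_derivative
      (\<Sum>i\<le>degree q. coeff q i * (- (B * t powr al * exp (- t)) * t ^ i))) (at t)"
    by (intro DERIV_sum DERIV_cmult mu_deriv[OF t])
  moreover have "(\<Sum>i\<le>degree q. coeff q i * (- (B * t powr al * exp (- t)) * t ^ i)) = - (B * t powr al * exp (- t)) * poly q t"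
    by (simp add: poly_altdef sum_distrib_left algebra_simps)
  ultimately show ?thesis unfolding Lf_def by simp
qed

lemma hn_deriv: assumes t: "t > 0"
  shows "((\<lambda>s. hn al A B j s) has_real_derivative (- (B * t powr al * exp (- t)) * (poly (gs (mu t) j) t)^2)) (at t)"
proof -
  define c where "c = B * t powr al * exp (- t)"
  define Pt where "Pt = gs (mu t) j"
  have sf: "sfam (\<lambda>s. gs (mu s) j) t"
    by (rule gs_sfam[OF mu_diffble[OF t]]) (use hn_pos hn_eq in \<open>metis less_irrefl\<close>)
  have "(\<lambda>s. hn al A B j s) differentiable (at t)"
    unfolding hn_eq by (rule Lf_diffble[OF mu_diffble[OF t] sfam_mult[OF sf sf]])
  then obtain L where L: "((\<lambda>s. hn al A B j s) has_real_derivative L) (at t)"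
    using real_differentiable_def by blast
  have G: "((\<lambda>s. Lf (mu s) (Pt * Pt)) has_real_derivative (- c * poly (Pt * Pt) t)) (at t)"
    unfolding c_def by (rule Lf_const_deriv[OF t])
  have f: "((\<lambda>s. Lf (mu s) (Pt * Pt) - hn al A B j s) has_real_derivative (- c * poly (Pt * Pt) t - L)) (at t)"
    by (rule DERIV_diff[OF G L])
  have mn: "\<forall>y. \<bar>t - y\<bar> < 1 \<longrightarrow> Lf (mu t) (Pt * Pt) - hn al A B j t \<le> Lf (mu y) (Pt * Pt) - hn al A B j y"
  proof (intro allI impI)
    fix y
    interpret my: mom "mu y" by (rule mom_s)
    have "hn al A B j y \<le> Lf (mu y) (Pt * Pt)"
      unfolding hn_eq my.h_def[symmetric] Pt_def by (rule my.min_prop) (simp_all add: gs_degree gs_monic)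
    moreover have "Lf (mu t) (Pt * Pt) - hn al A B j t = 0" unfolding hn_eq Pt_def by simp
    ultimately show "Lf (mu t) (Pt * Pt) - hn al A B j t \<le> Lf (mu y) (Pt * Pt) - hn al A B j y" by simp
  qed
  have "- c * poly (Pt * Pt) t - L = 0" by (rule DERIV_local_min[OF f _ mn]) simp
  hence "L = - c * (poly Pt t)^2" by (simp add: power2_eq_square)
  thus ?thesis using L unfolding c_def Pt_def by simp
qed

end

context wp begin

lemma Hn_eq: assumes t: "t > 0"
  shows "Hn al A B n t = - t * (\<Sum>j<n. (B * t powr al * exp (- t)) * (poly (gs (mu t) j) t)^2 / hn al A B j t)"
proof -
  have e: "(\<lambda>s. ln (Dn al A B n s)) = (\<lambda>s. \<Sum>j<n. ln (hn al A B j s))"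
    unfolding Dn_def by (intro ext ln_prod) (auto, metis hn_pos less_irrefl)
  have "((\<lambda>s. \<Sum>j<n. ln (hn al A B j s)) has_real_derivative
     (\<Sum>j<n. (- (B * t powr al * exp (- t)) * (poly (gs (mu t) j) t)^2) / hn al A B j t)) (at t)"
  proof (rule DERIV_sum)
    fix j
    show "((\<lambda>s. ln (hn al A B j s)) has_real_derivative
        (- (B * t powr al * exp (- t)) * (poly (gs (mu t) j) t)^2) / hn al A B j t) (at t)"
      using DERIV_chain2[OF DERIV_ln_divide[OF hn_pos[of j t]] hn_deriv[OF t, of j]]
      by (simp add: field_simps)
  qed
  hence "deriv (\<lambda>s. ln (Dn al A B n s)) t = (\<Sum>j<n. (- (B * t powr al * exp (- t)) * (poly (gs (mu t) j) t)^2) / hn al A B j t)"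
    unfolding e by (rule DERIV_imp_deriv)
  thus ?thesis unfolding Hn_def by (simp add: sum_negf)
qed

lemma main:
  assumes t: "t > 0" and n: "n \<ge> 1"
  shows "t * Rn al A B n t = Hn al A B n t - Hn al A B (n + 1) t
     \<and> (t + Hn al A B (n + 1) t - Hn al A B (n - 1) t - 2 * real n - al \<noteq> 0 \<longrightarrow>
         t * rn al A B n t =
           ((Hn al A B n t - real n * (real n + al)) * (t + Hn al A B (n + 1) t - Hn al A B (n - 1) t)
             + t * real n * (real n + al))
           / (t + Hn al A B (n + 1) t - Hn al A B (n - 1) t - 2 * real n - al))
     \<and> (t * rn al A B n t)\<^sup>2 =
         (real n * (real n + al) + t * rn al A B n t - Hn al A B n t)
         * ((t * Rn al A B n t)\<^sup>2
            + t * Rn al A B n t * (Hn al A B (n + 1) t + Hn al A B (n - 1) t - 2 * Hn al A B n t))"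
proof -
  define c where "c = B * t powr al * exp (- t)"
  interpret mom_ibp "mu t" al t c
  proof -
    interpret mom "mu t" by (rule mom_s)
    show "mom_ibp (mu t) al t c"
      by unfold_locales (use mu_rec[OF t] t in \<open>auto simp: c_def algebra_simps\<close>)
  qed
  have hh: "hn al A B k t = h k" for k unfolding hn_eq h_def ..
  have HH: "Hn al A B k t = Hs k" for k
    unfolding Hn_eq[OF t] Hs_def R_def hh c_def[symmetric] by simp
  have RR: "Rn al A B k t = R k" for k
    unfolding Rn_def R_def Pn_def OP_eq hh c_def[symmetric] by simp
  have rr: "rn al A B n t = c * poly (gs (mu t) n) t * poly (gs (mu t) (n-1)) t / h (n-1)"
    unfolding rn_def Pn_def OP_eq hh c_def[symmetric] by simp
  show ?thesis unfolding HH RR rr using final_alg[OF n] by simp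
qed

end

theorem theorem7:
  fixes \<alpha> A B t :: real and n :: nat
  assumes "\<alpha> > 0" and "A \<ge> 0" and "B > 0" and "t > 0" and "n \<ge> 1"
  shows "t * Rn \<alpha> A B n t = Hn \<alpha> A B n t - Hn \<alpha> A B (n + 1) t
     \<and> (t + Hn \<alpha> A B (n + 1) t - Hn \<alpha> A B (n - 1) t - 2 * real n - \<alpha> \<noteq> 0 \<longrightarrow>
         t * rn \<alpha> A B n t =
           ((Hn \<alpha> A B n t - real n * (real n + \<alpha>)) * (t + Hn \<alpha> A B (n + 1) t - Hn \<alpha> A B (n - 1) t)
             + t * real n * (real n + \<alpha>))
           / (t + Hn \<alpha> A B (n + 1) t - Hn \<alpha> A B (n - 1) t - 2 * real n - \<alpha>))
     \<and> (t * rn \<alpha> A B n t)\<^sup>2 =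
         (real n * (real n + \<alpha>) + t * rn \<alpha> A B n t - Hn \<alpha> A B n t)
         * ((t * Rn \<alpha> A B n t)\<^sup>2
            + t * Rn \<alpha> A B n t * (Hn \<alpha> A B (n + 1) t + Hn \<alpha> A B (n - 1) t - 2 * Hn \<alpha> A B n t))"
proof -
  interpret wp \<alpha> A B by unfold_locales (use assms in auto)
  show ?thesis by (rule main) (use assms in auto)
qed

end
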